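(* Let $N\subset\mathbb{N}$ be infinite and consider the subsequence $(\bar d_{\gamma_n})_{n\in N}$ of the basis $(\bar d_{\gamma_n})_{n\in\mathbb{N}}$ of $\mathfrak{X}_{\bar\Gamma}$. Then there exists an infinite set $M\subset N$ such that for no two $n,m\in M$ are the nodes $\gamma_n,\gamma_m$ neighbours.
   Context: Fix increasing sequences of positive integers $(m_k),(n_k),(l_k)$ tending to $\infty$ with $m_1=4$, $n_1=4$, $l_1=2$ and $m_km_{k-1}\le m_1^{l_k}$, $(n_{k-1}/m_{k-1})^{l_k}\le n_k/(m_{k-1}m_k)$ for all $k$. For each $q$ let $\mathrm{Net}_{1,q}$ be a finite symmetric $\frac{1}{4n_q^2}$-net of $[-1,1]$ containing $\pm1$. Construction of $\mathfrak{X}_{\bar\Gamma}$: finite sets of nodes $\bar\Delta_q$ are defined recursively, with $\bar\Gamma_q=\bar\Delta_1\cup\dots\cup\bar\Delta_q$; nodes are enumerated $(\gamma_n)_n$ so that each $\bar\Gamma_q$ is the initial interval $\{1,\dots,\#\bar\Gamma_q\}$ of $\mathbb N$ (so intervals of nodes make sense). For each $\gamma\in\bar\Delta_{q}$ one defines $\bar c^*_\gamma\in\ell_1(\bar\Gamma_{q-1})$ and $\bar d^*_\gamma=e^*_\gamma-\bar c^*_\gamma$, where $(e^*_\gamma)$ is the unit vector basis of $\ell_1$; then $\mathrm{span}\{\bar d^*_{\gamma_i}:i\le n\}=\mathrm{span}\{e^*_{\gamma_i}:i\le n\}$ for all $n$, and for an interval $I$ let $\bar P^*_I$ be the projection $\sum_n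 a_n\bar d^*_{\gamma_n}\mapsto\sum_{n\in I}a_n\bar d^*_{\gamma_n}$. Start with $\bar\Delta_1=\{1\}$, $\bar c^*_1=0$. Given $\bar\Delta_1,\dots,\bar\Delta_q$, the set $\bar\Delta_{q+1}$ consists of: (a) all tuples $\gamma=(q+1,0,m_j,I,\epsilon,\lambda e^*_\eta)$ with $1\le j\le q$, $I$ an interval in $\bar\Gamma_q$, $\epsilon\in\{\pm1\}$, $\lambda\in\mathrm{Net}_{1,q}$, $\eta\in\bar\Gamma_q$, $\bar P^*_I e^*_\eta\ne0$, $\lambda\neq 0$; for these $\bar c^*_\gamma=\frac{1}{m_j}\epsilon\lambda\bar P^*_Ie^*_\eta$, and we set $\mathrm{age}(\gamma)=1$; (b) all tuples $\gamma=(q+1,\xi,m_j,I,\epsilon,\lambda e^*_\eta)$ with $1\le p<q$, $1\le j\le p$, $\xi\in\bar\Delta_p$ of weight $m_j^{-1}$ and $\mathrm{age}(\xi)<n_j$, $\epsilon\in\{\pm1\}$, $\lambda\in\mathrm{Net}_{1,q}$, $\eta\in\bar\Gamma_q\setminus\bar\Gamma_p$, $I$ an interval in $\bar\Gamma_q\setminus\bar\Gamma_p$, $\bar P^*_I(\lambda e^*_\eta)\ne0$; for these $\bar c^*_\gamma=e^*_\xi+\frac1{m_j}\epsilon\lambda\bar P^*_Ie^*_\eta$ and $\mathrm{age}(\gamma)=\mathrm{age}(\xi)+1$. In both cases the weight of $\gamma$ is $w(\gamma)=m_j^{-1}$ and $\mathrm{rank}(\gamma)=q+1$. Let $\bar\Gamma=\bigcup_q\bar\Gamma_q$,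 let $\bar d_\gamma\in\ell_\infty(\bar\Gamma)$ be the vectors biorthogonal to $(\bar d^*_\delta)_\delta$ (i.e. $\bar d^*_\delta(\bar d_\gamma)=\delta_{\gamma\delta}$), and let $\mathfrak{X}_{\bar\Gamma}$ be their closed linear span in $\ell_\infty(\bar\Gamma)$ with the sup norm; $(\bar d_{\gamma_n})_n$ is a basis of $\mathfrak X_{\bar\Gamma}$. Evaluation analysis and neighbours: every node $\gamma\ne 1$ of weight $m_j^{-1}$ determines a unique chain $\xi_1,\dots,\xi_a=\gamma$ where $\xi_1$ has second coordinate $0$ and $\xi_i=(q_i+1,\xi_{i-1},m_j,\dots)$ for $1<i\le a$; the bd-part of $e^*_\gamma$ is $\sum_{i=1}^a\bar d^*_{\xi_i}$. Two nodes $\zeta,\zeta'$ are called neighbours if there is a node $\gamma$ whose chain $(\xi_i)_{i=1}^a$ satisfies $\zeta=\xi_{i_1}$, $\zeta'=\xi_{i_2}$ for some $i_1<i_2$. *)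

theory Defs
  imports Complex_Main
begin

text \<open>Nodes of the Bourgain--Delbaen type set \<open>\<bar>\<Gamma>\<close>.
  \<open>Root\<close> is the node 1 of \<open>\<bar>\<Delta>\<^sub>1\<close>.
  \<open>Nd r \<xi> j a b \<epsilon> \<lambda> \<eta>\<close> encodes the tuple \<open>(r, \<xi>, m\<^sub>j, I, \<epsilon>, \<lambda> e*\<^sub>\<eta>)\<close>, where
  \<open>\<xi> = None\<close> stands for the second coordinate 0, \<open>\<xi> = Some \<xi>'\<close> for the node \<open>\<xi>'\<close>,
  the weight \<open>m\<^sub>j\<close> is recorded by its index \<open>j\<close>, and the (nonempty) interval of nodes
  \<open>I\<close> is recorded by its endpoints \<open>a \<le> b\<close> in the enumeration, i.e. \<open>I = {\<gamma>\<^sub>a,\<dots>,\<gamma>\<^sub>b}\<close>.\<close>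
datatype node = Root | Nd nat "node option" nat nat nat int real node

fun weight :: "(nat \<Rightarrow> nat) \<Rightarrow> node \<Rightarrow> real" where
  "weight m Root = 0"
| "weight m (Nd r x j a b e lam eta) = 1 / real (m j)"

fun age :: "node \<Rightarrow> nat" where
  "age Root = 0"
| "age (Nd r None j a b e lam eta) = 1"
| "age (Nd r (Some x) j a b e lam eta) = age x + 1"

fun chain :: "node \<Rightarrow> node list" where
  "chain Root = []"
| "chain (Nd r None j a b e lam eta) = [Nd r None j a b e lam eta]"
| "chain (Nd r (Some x) j a b e lam eta) = chain x @ [Nd r (Some x) j a b e lam eta]"

definition params :: "(nat \<Rightarrow> nat) \<Rightarrow> (nat \<Rightarrow> nat) \<Rightarrow> (nat \<Rightarrow> nat) \<Rightarrow> (nat \<Rightarrow> real set) \<Rightarrow> bool" where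
  "params m n l Net \<longleftrightarrow>
     (\<forall>k\<ge>1. m k < m (Suc k) \<and> n k < n (Suc k) \<and> l k < l (Suc k)) \<and>
     m 1 = 4 \<and> n 1 = 4 \<and> l 1 = 2 \<and>
     (\<forall>k\<ge>2. m k * m (k - 1) \<le> m 1 ^ l k) \<and>
     (\<forall>k\<ge>2. (real (n (k - 1)) / real (m (k - 1))) ^ l k
               \<le> real (n k) / (real (m (k - 1)) * real (m k))) \<and>
     (\<forall>q\<ge>1. finite (Net q) \<and> Net q \<subseteq> {-1..1} \<and> (\<forall>x\<in>Net q. - x \<in> Net q) \<and>
             1 \<in> Net q \<and> -1 \<in> Net q \<and>
             (\<forall>x\<in>{-1..1::real}. \<exists>y\<in>Net q. \<bar>x - y\<bar> \<le> 1 / (4 * real (n q) ^ 2)))"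

definition Gam :: "(nat \<Rightarrow> node set) \<Rightarrow> nat \<Rightarrow> node set" where
  "Gam D q = (\<Union>p\<in>{1..q}. D p)"

definition GamAll :: "(nat \<Rightarrow> node set) \<Rightarrow> node set" where
  "GamAll D = (\<Union>q\<in>{1..}. D q)"

text \<open>Elements of \<open>\<ell>\<^sub>1\<close> are represented as (finitely supported) functions \<open>node \<Rightarrow> real\<close>.\<close>
definition estar :: "node \<Rightarrow> node \<Rightarrow> real" where
  "estar \<eta> = (\<lambda>\<zeta>. if \<zeta> = \<eta> then 1 else 0)"

definition dstar :: "(node \<Rightarrow> node \<Rightarrow> real) \<Rightarrow> node \<Rightarrow> node \<Rightarrow> real" where
  "dstar c \<gamma> = (\<lambda>\<zeta>. estar \<gamma> \<zeta> - c \<gamma> \<zeta>)"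

definition Pstar :: "(nat \<Rightarrow> node) \<Rightarrow> (node \<Rightarrow> node \<Rightarrow> real) \<Rightarrow> nat \<Rightarrow> nat
                     \<Rightarrow> (node \<Rightarrow> real) \<Rightarrow> (node \<Rightarrow> real)" where
  "Pstar g c a b f = (THE h. \<exists>K (co :: nat \<Rightarrow> real).
      f = (\<lambda>\<zeta>. \<Sum>k\<in>{1..K}. co k * dstar c (g k) \<zeta>) \<and>
      h = (\<lambda>\<zeta>. \<Sum>k\<in>{a..b} \<inter> {1..K}. co k * dstar c (g k) \<zeta>))"

definition nodesA :: "(nat \<Rightarrow> real set) \<Rightarrow> (nat \<Rightarrow> node set) \<Rightarrow> (nat \<Rightarrow> node)
                      \<Rightarrow> (node \<Rightarrow> node \<Rightarrow> real) \<Rightarrow> nat \<Rightarrow> node set" where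
  "nodesA Net D g c q = {Nd (q + 1) None j a b e lam eta | j a b e lam eta.
      1 \<le> j \<and> j \<le> q \<and> 1 \<le> a \<and> a \<le> b \<and> b \<le> card (Gam D q) \<and>
      e \<in> {1, -1} \<and> lam \<in> Net q \<and> lam \<noteq> 0 \<and> eta \<in> Gam D q \<and>
      Pstar g c a b (estar eta) \<noteq> (\<lambda>_. 0)}"

definition nodesB :: "(nat \<Rightarrow> nat) \<Rightarrow> (nat \<Rightarrow> nat) \<Rightarrow> (nat \<Rightarrow> real set) \<Rightarrow> (nat \<Rightarrow> node set)
                      \<Rightarrow> (nat \<Rightarrow> node) \<Rightarrow> (node \<Rightarrow> node \<Rightarrow> real) \<Rightarrow> nat \<Rightarrow> node set" where
  "nodesB m n Net D g c q = {Nd (q + 1) (Some x) j a b e lam eta | x j a b e lam eta p.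
      1 \<le> p \<and> p < q \<and> 1 \<le> j \<and> j \<le> p \<and> x \<in> D p \<and> weight m x = 1 / real (m j) \<and>
      age x < n j \<and> e \<in> {1, -1} \<and> lam \<in> Net q \<and> eta \<in> Gam D q - Gam D p \<and>
      card (Gam D p) < a \<and> a \<le> b \<and> b \<le> card (Gam D q) \<and>
      Pstar g c a b (\<lambda>\<zeta>. lam * estar eta \<zeta>) \<noteq> (\<lambda>_. 0)}"

fun cformula :: "(nat \<Rightarrow> nat) \<Rightarrow> (nat \<Rightarrow> node) \<Rightarrow> (node \<Rightarrow> node \<Rightarrow> real) \<Rightarrow> node \<Rightarrow> node \<Rightarrow> real" where
  "cformula m g c Root = (\<lambda>_. 0)"
| "cformula m g c (Nd r None j a b e lam eta) =
     (\<lambda>\<zeta>. 1 / real (m j) * real_of_int e * lam * Pstar g c a b (estar eta) \<zeta>)"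
| "cformula m g c (Nd r (Some x) j a b e lam eta) =
     (\<lambda>\<zeta>. estar x \<zeta> + 1 / real (m j) * real_of_int e * lam * Pstar g c a b (estar eta) \<zeta>)"

text \<open>The recursive construction of \<open>\<bar>\<Delta>\<^sub>q\<close>, the enumeration \<open>(\<gamma>\<^sub>n)\<^sub>n\<^sub>\<ge>\<^sub>1\<close> (given by \<open>g\<close>)
  and the functionals \<open>c*\<^sub>\<gamma>\<close> (given by \<open>c\<close>).\<close>
definition construction :: "(nat \<Rightarrow> nat) \<Rightarrow> (nat \<Rightarrow> nat) \<Rightarrow> (nat \<Rightarrow> real set) \<Rightarrow> (nat \<Rightarrow> node set)
                            \<Rightarrow> (nat \<Rightarrow> node) \<Rightarrow> (node \<Rightarrow> node \<Rightarrow> real) \<Rightarrow> bool" where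
  "construction m n Net D g c \<longleftrightarrow>
     D 1 = {Root} \<and>
     (\<forall>q\<ge>1. D (q + 1) = nodesA Net D g c q \<union> nodesB m n Net D g c q) \<and>
     bij_betw g {1..} (GamAll D) \<and>
     (\<forall>q\<ge>1. g ` {1..card (Gam D q)} = Gam D q) \<and>
     (\<forall>\<gamma>\<in>GamAll D. c \<gamma> = cformula m g c \<gamma>)"

definition neighbours :: "(nat \<Rightarrow> node set) \<Rightarrow> node \<Rightarrow> node \<Rightarrow> bool" where
  "neighbours D \<zeta> \<zeta>' \<longleftrightarrow> (\<exists>\<gamma>\<in>GamAll D. \<exists>i1 i2. i1 < i2 \<and> i2 < length (chain \<gamma>) \<and>
       chain \<gamma> ! i1 = \<zeta> \<and> chain \<gamma> ! i2 = \<zeta>')"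

end

theory Submission
  imports Defs "HOL-Library.Ramsey"
begin

fun jj :: "node \<Rightarrow> nat" where
  "jj Root = 0"
| "jj (Nd r x j a b e lam eta) = j"

fun good :: "(nat \<Rightarrow> nat) \<Rightarrow> node \<Rightarrow> bool" where
  "good n Root = True"
| "good n (Nd r None j a b e lam eta) = (1 \<le> j \<and> 1 \<le> n j)"
| "good n (Nd r (Some x) j a b e lam eta) = (good n x \<and> x \<noteq> Root \<and> jj x = j \<and> age x < n j)"

lemma age_len: "age x = length (chain x)"
  by (induction x rule: chain.induct) auto

lemma chain_nth: "i < length (chain d) \<Longrightarrow> chain (chain d ! i) = take (Suc i) (chain d)"
proof (induction d arbitrary: i rule: chain.induct)
  case 1 then show ?case by simp
next
  case (2 r j a b e lam eta) then show ?case by simp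
next
  case (3 r x j a b e lam eta)
  show ?case
  proof (cases "i < length (chain x)")
    case True
    then show ?thesis using 3 by (simp add: nth_append)
  next
    case False
    then have "i = length (chain x)" using 3(2) by simp
    then show ?thesis by simp
  qed
qed

lemma good_jj: "good n d \<Longrightarrow> d \<noteq> Root \<Longrightarrow> 1 \<le> jj d"
  by (induction d rule: chain.induct) auto

lemma good_chain_jj: "good n d \<Longrightarrow> z \<in> set (chain d) \<Longrightarrow> jj z = jj d"
  by (induction d rule: chain.induct) auto

lemma good_age: "good n d \<Longrightarrow> age d \<le> n (jj d)"
  by (induction d rule: chain.induct) auto

lemma nb_desc:
  assumes "neighbours D a b"
  shows "a \<in> set (chain b) \<and> length (chain a) < length (chain b)"
proof -
  obtain d i1 i2 where d: "i1 < i2" "i2 < length (chain d)" "chain d ! i1 = a" "chain d ! i2 = b"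
    using assms unfolding neighbours_def by blast
  have ca: "chain a = take (Suc i1) (chain d)" using chain_nth d by fastforce
  have cb: "chain b = take (Suc i2) (chain d)" using chain_nth d by fastforce
  have "a = chain b ! i1" using d cb by simp
  moreover have "i1 < length (chain b)" using d cb by simp
  ultimately have "a \<in> set (chain b)" by simp
  moreover have "length (chain a) < length (chain b)" using ca cb d by simp
  ultimately show ?thesis by blast
qed

lemma mono_step:
  fixes f :: "nat \<Rightarrow> nat"
  assumes "\<forall>k\<ge>1. f k < f (Suc k)" "1 \<le> a" "a < b"
  shows "f a < f b"
  using assms(3)
proof (induction b)
  case 0 then show ?case by simp
next
  case (Suc b)
  show ?case
  proof (cases "a = b")
    case True then show ?thesis using assms(1,2) by simp
  next
    case False
    then have "a < b" using Suc.prems by simp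
    then have "f a < f b" using Suc.IH by simp
    moreover have "f b < f (Suc b)" using assms(1,2) \<open>a < b\<close> by simp
    ultimately show ?thesis by simp
  qed
qed

lemma all_good:
  assumes P: "params m n l Net" and C: "construction m n Net D g c"
  shows "q \<ge> 1 \<Longrightarrow> \<gamma> \<in> D q \<Longrightarrow> good n \<gamma>"
proof (induction q arbitrary: \<gamma> rule: less_induct)
  case (less q)
  have mst: "\<forall>k\<ge>1. m k < m (Suc k)" and nst: "\<forall>k\<ge>1. n k < n (Suc k)"
    and m1: "m 1 = 4" and n1: "n 1 = 4"
    using P unfolding params_def by auto
  have npos: "1 \<le> n j" if "1 \<le> j" for j
  proof (cases "j = 1")
    case True then show ?thesis using n1 by simp
  next
    case False then show ?thesis using mono_step[OF nst, of 1 j] that n1 by simp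
  qed
  have mpos: "0 < m j" if "1 \<le> j" for j
  proof (cases "j = 1")
    case True then show ?thesis using m1 by simp
  next
    case False then show ?thesis using mono_step[OF mst, of 1 j] that m1 by simp
  qed
  have minj: "j = j'" if "1 \<le> j" "1 \<le> j'" "m j = m j'" for j j'
  proof (rule ccontr)
    assume "j \<noteq> j'"
    then have "j < j' \<or> j' < j" by arith
    then show False using mono_step[OF mst, of j j'] mono_step[OF mst, of j' j] that by auto
  qed
  show ?case
  proof (cases "q = 1")
    case True
    then show ?thesis using C less.prems unfolding construction_def by auto
  next
    case False
    define q' where "q' = q - 1"
    have q': "q = q' + 1" "q' \<ge> 1" using less.prems False unfolding q'_def by arith+
    then have "\<gamma> \<in> nodesA Net D g c q' \<union> nodesB m n Net D g c q'"
      using C less.prems unfolding construction_def by auto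
    then show ?thesis
    proof
      assume "\<gamma> \<in> nodesA Net D g c q'"
      then obtain j a b e lam eta where "\<gamma> = Nd (q' + 1) None j a b e lam eta" "1 \<le> j"
        unfolding nodesA_def by blast
      then show ?thesis using npos by simp
    next
      assume "\<gamma> \<in> nodesB m n Net D g c q'"
      then obtain x j a b e lam eta p where h: "\<gamma> = Nd (q' + 1) (Some x) j a b e lam eta"
        "1 \<le> p" "p < q'" "1 \<le> j" "x \<in> D p" "weight m x = 1 / real (m j)" "age x < n j"
        unfolding nodesB_def by blast
      have gx: "good n x" using less.IH[of p x] h q' by simp
      have mj: "0 < m j" using mpos h(4) .
      have xR: "x \<noteq> Root" using h(6) mj by auto
      then obtain r' o' j' a' b' e' lam' eta' where xe: "x = Nd r' o' j' a' b' e' lam' eta'"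
        by (cases x) auto
      have j1: "1 \<le> j'" using good_jj[OF gx xR] xe by simp
      have "1 / real (m j') = 1 / real (m j)" using h(6) xe by simp
      then have "m j' = m j" using mj mpos[OF j1] by (simp add: field_simps)
      then have "j' = j" using minj j1 h(4) by blast
      then show ?thesis using h gx xR xe by simp
    qed
  qed
qed

theorem lemma3p2:
  fixes m n l :: "nat \<Rightarrow> nat" and Net :: "nat \<Rightarrow> real set"
    and D :: "nat \<Rightarrow> node set" and g :: "nat \<Rightarrow> node" and c :: "node \<Rightarrow> node \<Rightarrow> real"
    and N :: "nat set"
  assumes "params m n l Net"
    and "construction m n Net D g c"
    and "N \<subseteq> {1..}" and "infinite N"
  shows "\<exists>M\<subseteq>N. infinite M \<and> (\<forall>i\<in>M. \<forall>k\<in>M. i \<noteq> k \<longrightarrow> \<not> neighbours D (g i) (g k))"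
proof -
  have bij: "bij_betw g {1..} (GamAll D)" using assms(2) unfolding construction_def by blast
  have inj: "inj_on g {1..}" using bij bij_betw_def by blast
  have goodg: "good n (g k)" if "k \<in> N" for k
  proof -
    have "g k \<in> GamAll D" using bij that assms(3) bij_betwE by blast
    then obtain q where "q \<ge> 1" "g k \<in> D q" unfolding GamAll_def by auto
    then show ?thesis using all_good[OF assms(1,2)] by blast
  qed
  define R where "R i k \<longleftrightarrow> neighbours D (g i) (g k) \<or> neighbours D (g k) (g i)" for i k
  define f where "f S = (if \<exists>i k. S = {i, k} \<and> i \<noteq> k \<and> R i k then 1 else (0::nat))" for S
  have fR: "f {x, y} = (if R x y then 1 else 0)" if "x \<noteq> y" for x y
    using that unfolding f_def R_def by (auto simp: doubleton_eq_iff)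
  obtain Y t where Y: "Y \<subseteq> N" "infinite Y" "t < 2" "\<forall>x\<in>Y. \<forall>y\<in>Y. x \<noteq> y \<longrightarrow> f {x, y} = t"
  proof -
    have "\<forall>x\<in>N. \<forall>y\<in>N. x \<noteq> y \<longrightarrow> f {x, y} < 2" unfolding f_def by simp
    from Ramsey2[OF assms(4) this] show ?thesis using that by blast
  qed
  show ?thesis
  proof (cases "t = 0")
    case True
    have "\<not> neighbours D (g i) (g k)" if "i \<in> Y" "k \<in> Y" "i \<noteq> k" for i k
    proof
      assume "neighbours D (g i) (g k)"
      then have "R i k" unfolding R_def by simp
      then have "f {i, k} = 1" using fR[OF that(3)] by simp
      moreover have "f {i, k} = t" using Y(4) that by blast
      ultimately show False using True by simp
    qed
    then show ?thesis using Y(1,2) by blast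
  next
    case False
    then have t1: "t = 1" using Y(3) by simp
    have Rall: "R x y" if "x \<in> Y" "y \<in> Y" "x \<noteq> y" for x y
    proof -
      have "f {x, y} = t" using Y(4) that by blast
      then have "f {x, y} = 1" using t1 by simp
      show ?thesis
      proof (rule ccontr)
        assume "\<not> R x y"
        then have "f {x, y} = 0" using fR[OF that(3)] by (simp only: if_False)
        then show False using \<open>f {x, y} = 1\<close> by simp
      qed
    qed
    obtain i0 where i0: "i0 \<in> Y" using Y(2) by (metis finite.emptyI ex_in_conv)
    define S where "S = {k \<in> Y. g i0 \<in> set (chain (g k))}"
    define T where "T = {k \<in> Y. g k \<in> set (chain (g i0))}"
    have "Y \<subseteq> S \<union> T \<union> {i0}"
    proof
      fix y assume y: "y \<in> Y"
      show "y \<in> S \<union> T \<union> {i0}"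
      proof (cases "y = i0")
        case False
        then have "R i0 y" using Rall i0 y by simp
        then have "g i0 \<in> set (chain (g y)) \<or> g y \<in> set (chain (g i0))"
          unfolding R_def using nb_desc by blast
        then show ?thesis using y unfolding S_def T_def by blast
      qed simp
    qed
    moreover have "finite T"
    proof -
      have "g ` T \<subseteq> set (chain (g i0))" unfolding T_def by auto
      moreover have "T \<subseteq> {1..}" using Y(1) assms(3) unfolding T_def by blast
      then have "inj_on g T" using inj inj_on_subset by blast
      ultimately show ?thesis using finite_imageD finite_subset by (metis List.finite_set)
    qed
    ultimately have infS: "infinite S" using Y(2) finite_subset by auto
    have injS: "inj_on (\<lambda>k. age (g k)) S"
    proof (rule inj_onI)
      fix x y assume xy: "x \<in> S" "y \<in> S" "age (g x) = age (g y)"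
      show "x = y"
      proof (rule ccontr)
        assume "x \<noteq> y"
        then have "R x y" using Rall xy unfolding S_def by blast
        then show False using nb_desc[of D "g x" "g y"] nb_desc[of D "g y" "g x"] xy(3) unfolding R_def age_len by linarith
      qed
    qed
    have "(\<lambda>k. age (g k)) ` S \<subseteq> {..n (jj (g i0))}"
    proof
      fix a assume "a \<in> (\<lambda>k. age (g k)) ` S"
      then obtain k where k: "k \<in> S" "a = age (g k)" by blast
      have gk: "good n (g k)" using goodg k Y(1) unfolding S_def by blast
      have "jj (g i0) = jj (g k)" using good_chain_jj[OF gk] k unfolding S_def by blast
      then show "a \<in> {..n (jj (g i0))}" using good_age[OF gk] k by simp
    qed
    then have "finite ((\<lambda>k. age (g k)) ` S)" using finite_subset by blast
    then have "finite S" using injS finite_imageD by blast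
    then show ?thesis using infS by blast
  qed
qed

end
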